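(* Let $\mathcal N$ be an $(M,N,q)$-Schreier norming set. Let $k\ge2$ and let $a_1,\dots,a_{k-1}$ be non-negative integers, not all zero. If $x_1^*,\dots,x_t^*\in\mathcal N$ is an $S_{\sum_{\ell<k}a_\ell n_{2\ell}}$-admissible block sequence and $(\beta_i)_{i=1}^t\in Ba(\ell_q)$, then $$\frac{1}{\prod_{\ell<k}m_{2\ell}^{a_\ell}}\sum_{i=1}^t\beta_ix_i^*\in\mathcal N.$$
   Context: Notation. $c_{00}$ is the space of finitely supported real sequences, $(e_i)_{i\ge1}$ its unit vector basis and $(e_i^* )_{i\ge1}$ the biorthogonal functionals. For a functional $x^*=\sum_i a_ie_i^*$, ${\rm supp}\,x^*=\{i:a_i\neq0\}$. For finite $E,F\subset\mathbb N$, $E<F$ means $\max E<\min F$. $Ba(\ell_q)$ is the closed unit ball of $\ell_q$ (applied to finite scalar sequences). For an interval $E\subset\mathbb N$, $Ex^*$ is the restriction of $x^*$ to the coordinates in $E$. Schreier families: $S_0=\{\{n\}:n\in\mathbb N\}\cup\{\emptyset\}$ and $S_{n+1}=\{\bigcup_{i=1}^mF_i: m\in\mathbb N,\ F_i\in S_n,\ m\le\min F_1,\ F_1<\dots<F_m\}\cup\{\emptyset\}$. Successive finite sets $E_1<\dots<E_k$ are $S_n$-admissible if $\{\min E_1,\dots,\min E_k\}\in S_n$; a finite block sequence $x_1^*,\dots,x_k^*$ (${\rm supp}\,x_1^*<\dots<{\rm supp}\,x_k^*$) is $S_n$-admissible if $({\rm supp}\,x_i^* )_{i=1}^k$ is.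 Sequences. $M=(m_i)$, $N=(n_i)$ are increasing sequences of positive integers such that (i) $m_1>3$, $m_2=m_1^5$, $m_{2j+1}=m_{2j}^5$ for $j\ge1$, and there is an increasing sequence $(s_i)$ of positive integers with $m_{2j}=\prod_{i=1}^{j-1}m_{2i}^{s_i}$ for $j\ge2$; (ii) defining for $j\ge2$ $f_j=\max\{\rho n_1+\sum_{1\le i<j}\rho_in_{2i}:\ \rho,\rho_i\in\mathbb N\cup\{0\},\ m_1^{\rho}\prod_{1\le i<j}m_{2i}^{\rho_i}<m_{2j}\}$, one has $4f_j<n_{2j}$ for all $j\ge2$, and $5n_1<n_2$. Norming sets. A set $\mathcal N\subset{\rm span}\{e_i^*\}$ is norming if it contains every $e_n^*$, satisfies $|x^*(e_n)|\le1$ for all $x^*\in\mathcal N$, $n\in\mathbb N$, is symmetric, and $Ex^*\in\mathcal N$ for all $x^*\in\mathcal N$ and intervals $E\subset\mathbb N$. $(M,N,q)$-Schreier. Let $1<p,q<\infty$, $1/p+1/q=1$. For $k\ge1$ let $\mathcal N_k$ be the set of all $\frac1{m_{2k}}\sum_{i=1}^d\gamma_ix_i^*$ where $d\in\mathbb N$, $(\gamma_i)_{i=1}^d\in Ba(\ell_q)$, and $x_1^*,\dots,x_d^*\in\mathcal N$ is an $S_{n_{2k}}$-admissible block sequence. Let $\mathcal N^q_\infty$ be the union over $k\ge0$ of the sets of all $\frac1{m_{2k+1}}\sum_{i=1}^d\gamma_iEx_i^*$ where $(\gamma_i)\in 2^{1/p}Ba(\ell_q)$, $E$ is an interval of $\mathbb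 N$, $x_1^*,\dots,x_d^*$ is an $S_{n_{2k+1}}$-admissible block sequence with $x_i^*\in\mathcal N_{j_i}$ and $j_1,\dots,j_d$ pairwise distinct. A norming set $\mathcal N$ is $(M,N,q)$-Schreier if $\mathcal N_j\subset\mathcal N$ for all $j\ge1$ and $\mathcal N\subset\bigcup_{j\ge1}\mathcal N_j\cup\mathcal N^q_\infty\cup\{\pm e_n^*:n\in\mathbb N\}$. *)

theory Defs
  imports Complex_Main
begin

text \<open>Functionals in span of the e_i^* are modelled as finitely supported functions
  nat \<Rightarrow> real vanishing at 0 (coordinates are indexed by positive integers).\<close>

type_synonym fnl = "nat \<Rightarrow> real"

definition supp :: "fnl \<Rightarrow> nat set" where
  "supp x = {i. x i \<noteq> 0}"

definition unit_fnl :: "nat \<Rightarrow> fnl" where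
  "unit_fnl n = (\<lambda>i. if i = n then 1 else 0)"

definition is_interval :: "nat set \<Rightarrow> bool" where
  "is_interval E \<longleftrightarrow> (\<forall>a b c. a \<in> E \<longrightarrow> c \<in> E \<longrightarrow> a \<le> b \<longrightarrow> b \<le> c \<longrightarrow> b \<in> E)"

definition restr :: "nat set \<Rightarrow> fnl \<Rightarrow> fnl" where
  "restr E x = (\<lambda>i. if i \<in> E then x i else 0)"

definition set_less :: "nat set \<Rightarrow> nat set \<Rightarrow> bool" where
  "set_less E F \<longleftrightarrow> (\<forall>a\<in>E. \<forall>b\<in>F. a < b)"

definition successive :: "nat set list \<Rightarrow> bool" where
  "successive Fs \<longleftrightarrow> (\<forall>i j. i < j \<longrightarrow> j < length Fs \<longrightarrow> set_less (Fs ! i) (Fs ! j))"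

fun schreier :: "nat \<Rightarrow> nat set set" where
  "schreier 0 = {{n} | n. n \<ge> 1} \<union> {{}}"
| "schreier (Suc n) =
     {\<Union> (set Fs) | Fs. Fs \<noteq> [] \<and> (\<forall>F \<in> set Fs. F \<in> schreier n \<and> F \<noteq> {})
        \<and> successive Fs \<and> length Fs \<le> Min (hd Fs)} \<union> {{}}"

text \<open>Block sequences and S_n-admissibility (zero functionals, having empty support,
  impose no constraint).\<close>
definition block_seq :: "fnl list \<Rightarrow> bool" where
  "block_seq xs \<longleftrightarrow> successive (map supp xs)"

definition admissible :: "nat \<Rightarrow> fnl list \<Rightarrow> bool" where
  "admissible n xs \<longleftrightarrow> block_seq xs \<and>
     {Min (supp x) | x. x \<in> set xs \<and> supp x \<noteq> {}} \<in> schreier n"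

definition in_ball :: "real \<Rightarrow> real \<Rightarrow> real list \<Rightarrow> bool" where
  "in_ball q c \<gamma> \<longleftrightarrow> (\<Sum>i<length \<gamma>. \<bar>\<gamma> ! i\<bar> powr q) powr (1 / q) \<le> c"

definition lin_comb :: "real list \<Rightarrow> fnl list \<Rightarrow> fnl" where
  "lin_comb \<gamma> xs = (\<lambda>j. \<Sum>i<length xs. \<gamma> ! i * (xs ! i) j)"

definition norming :: "fnl set \<Rightarrow> bool" where
  "norming NN \<longleftrightarrow>
     (\<forall>x\<in>NN. finite (supp x) \<and> x 0 = 0) \<and>
     (\<forall>n\<ge>1. unit_fnl n \<in> NN) \<and>
     (\<forall>x\<in>NN. \<forall>n. \<bar>x n\<bar> \<le> 1) \<and>
     (\<forall>x\<in>NN. (\<lambda>i. - x i) \<in> NN) \<and>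
     (\<forall>x\<in>NN. \<forall>E. is_interval E \<longrightarrow> restr E x \<in> NN)"

text \<open>The sets N_k (k \<ge> 1); sequences m, n are indexed from 1.\<close>
definition NN_k :: "(nat \<Rightarrow> nat) \<Rightarrow> (nat \<Rightarrow> nat) \<Rightarrow> real \<Rightarrow> fnl set \<Rightarrow> nat \<Rightarrow> fnl set" where
  "NN_k m n q NN k =
     {(\<lambda>j. (1 / real (m (2*k))) * lin_comb \<gamma> xs j) | \<gamma> xs.
        xs \<noteq> [] \<and> length \<gamma> = length xs \<and> in_ball q 1 \<gamma> \<and>
        set xs \<subseteq> NN \<and> admissible (n (2*k)) xs}"

definition NN_inf :: "(nat \<Rightarrow> nat) \<Rightarrow> (nat \<Rightarrow> nat) \<Rightarrow> real \<Rightarrow> fnl set \<Rightarrow> fnl set" where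
  "NN_inf m n q NN =
     (\<Union>k. {(\<lambda>j. (1 / real (m (2*k+1))) * lin_comb \<gamma> (map (restr E) xs) j) | \<gamma> E xs js.
        xs \<noteq> [] \<and> length \<gamma> = length xs \<and>
        in_ball q (2 powr (1 / (q / (q - 1)))) \<gamma> \<and>
        is_interval E \<and> admissible (n (2*k+1)) xs \<and>
        length js = length xs \<and> distinct js \<and>
        (\<forall>i<length xs. js ! i \<ge> 1 \<and> xs ! i \<in> NN_k m n q NN (js ! i))})"

definition schreier_norming :: "(nat \<Rightarrow> nat) \<Rightarrow> (nat \<Rightarrow> nat) \<Rightarrow> real \<Rightarrow> fnl set \<Rightarrow> bool" where
  "schreier_norming m n q NN \<longleftrightarrow> norming NN \<and>
     (\<forall>j\<ge>1. NN_k m n q NN j \<subseteq> NN) \<and>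
     NN \<subseteq> (\<Union>j\<in>{1..}. NN_k m n q NN j) \<union> NN_inf m n q NN \<union>
            {unit_fnl i | i. i \<ge> 1} \<union> {(\<lambda>t. - unit_fnl i t) | i. i \<ge> 1}"

definition f_seq :: "(nat \<Rightarrow> nat) \<Rightarrow> (nat \<Rightarrow> nat) \<Rightarrow> nat \<Rightarrow> nat" where
  "f_seq m n j = Max {\<rho> * n 1 + (\<Sum>i\<in>{1..<j}. \<rho>s i * n (2*i)) | \<rho> \<rho>s.
       m 1 ^ \<rho> * (\<Prod>i\<in>{1..<j}. m (2*i) ^ \<rho>s i) < m (2*j)}"

definition MN_sequences :: "(nat \<Rightarrow> nat) \<Rightarrow> (nat \<Rightarrow> nat) \<Rightarrow> bool" where
  "MN_sequences m n \<longleftrightarrow>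
     (\<forall>i\<ge>1. m i \<ge> 1 \<and> m i < m (Suc i) \<and> n i \<ge> 1 \<and> n i < n (Suc i)) \<and>
     m 1 > 3 \<and> m 2 = m 1 ^ 5 \<and> (\<forall>j\<ge>1. m (2*j+1) = m (2*j) ^ 5) \<and>
     (\<exists>s::nat \<Rightarrow> nat. (\<forall>i\<ge>1. s i \<ge> 1 \<and> s i < s (Suc i)) \<and>
        (\<forall>j\<ge>2. m (2*j) = (\<Prod>i\<in>{1..<j}. m (2*i) ^ s i))) \<and>
     (\<forall>j\<ge>2. 4 * f_seq m n j < n (2*j)) \<and> 5 * n 1 < n 2"

end

theory Submission
  imports Defs
begin


lemma successive_iff: "successive Fs \<longleftrightarrow> sorted_wrt set_less Fs"
  unfolding successive_def sorted_wrt_iff_nth_less by blast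

lemma schreier_fin_pos: "F \<in> schreier n \<Longrightarrow> finite F \<and> (\<forall>x\<in>F. x \<ge> 1)"
proof (induction n arbitrary: F)
  case 0 then show ?case by auto
next
  case (Suc n)
  then show ?case by auto
qed

lemma set_less_mono: "set_less A B \<Longrightarrow> A' \<subseteq> A \<Longrightarrow> B' \<subseteq> B \<Longrightarrow> set_less A' B'"
  unfolding set_less_def by blast

lemma sorted_wrt_filter_map_int:
  "sorted_wrt set_less Fs \<Longrightarrow> sorted_wrt set_less (filter (\<lambda>G. G \<noteq> {}) (map (\<lambda>G. G \<inter> A) Fs))"
  apply (rule sorted_wrt_filter)
  apply (simp add: sorted_wrt_map)
  apply (erule sorted_wrt_mono_rel[rotated])
  using set_less_mono by blast

lemma schreier_hered: "F \<in> schreier n \<Longrightarrow> A \<subseteq> F \<Longrightarrow> A \<in> schreier n"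
proof (induction n arbitrary: F A)
  case 0 then show ?case by (auto simp: subset_singleton_iff)
next
  case (Suc n)
  show ?case
  proof (cases "A = {}")
    case True then show ?thesis by simp
  next
    case False
    from Suc.prems obtain Fs where Fs: "F = \<Union>(set Fs)" "Fs \<noteq> []" "\<forall>G\<in>set Fs. G \<in> schreier n \<and> G \<noteq> {}"
      "successive Fs" "length Fs \<le> Min (hd Fs)"
      using False by auto
    define Fs' where "Fs' = filter (\<lambda>G. G \<noteq> {}) (map (\<lambda>G. G \<inter> A) Fs)"
    have U: "A = \<Union>(set Fs')" unfolding Fs'_def using Suc.prems(2) Fs(1) by auto blast
    have ne: "Fs' \<noteq> []" using U False by auto
    have mem: "\<forall>G\<in>set Fs'. G \<in> schreier n \<and> G \<noteq> {}"
      unfolding Fs'_def using Fs(3) Suc.IH by auto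
    have succ: "successive Fs'" unfolding successive_iff Fs'_def
      by (rule sorted_wrt_filter_map_int) (use Fs(4) successive_iff in auto)
    have len: "length Fs' \<le> length Fs" unfolding Fs'_def
      by (metis length_filter_le length_map)
    have fin: "\<forall>G\<in>set Fs. finite G" using Fs(3) schreier_fin_pos by blast
    have "Min (hd Fs) \<le> Min (hd Fs')"
    proof -
      have "hd Fs' \<in> set Fs'" using ne by simp
      then obtain G where G: "G \<in> set Fs" "hd Fs' = G \<inter> A" "G \<inter> A \<noteq> {}" unfolding Fs'_def by auto
      have "finite (hd Fs')" using G fin by auto
      then have "Min (hd Fs') \<in> hd Fs'" using G by (intro Min_in) auto
      then have mG: "Min (hd Fs') \<in> G" using G by auto
      obtain G0 Gt where FsC: "Fs = G0 # Gt" using Fs(2) by (cases Fs) auto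
      have "\<forall>x\<in>G. Min G0 \<le> x"
      proof (cases "G = G0")
        case True then show ?thesis using fin FsC by auto
      next
        case False
        then have "G \<in> set Gt" using G FsC by auto
        then have "set_less G0 G" using Fs(4) FsC successive_iff by auto
        moreover have "Min G0 \<in> G0" using fin FsC Fs(3) by (intro Min_in) auto
        ultimately show ?thesis unfolding set_less_def by force
      qed
      then show ?thesis using mG FsC by auto
    qed
    then have "length Fs' \<le> Min (hd Fs')" using len Fs(5) by linarith
    then show ?thesis using U ne mem succ by auto
  qed
qed



definition part :: "nat set list \<Rightarrow> nat set \<Rightarrow> nat \<Rightarrow> nat \<Rightarrow> bool" where
 "part Gs F b a \<longleftrightarrow> (\<forall>G\<in>set Gs. G \<noteq> {} \<and> G \<in> schreier b) \<and> sorted_wrt set_less Gs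
    \<and> \<Union>(set Gs) = F \<and> Min ` set Gs \<in> schreier a"

lemma UN_list_nth: "(\<Union>X\<in>set xs. f X) = (\<Union>i<length xs. f (xs!i))"
proof -
  have "set xs = (\<lambda>i. xs!i) ` {..<length xs}" by (auto simp: in_set_conv_nth)
  then show ?thesis by simp
qed

lemma list_choice: "\<forall>x\<in>set xs. \<exists>y. P x y \<Longrightarrow> \<exists>ys. list_all2 P xs ys"
proof (induction xs)
  case Nil then show ?case by auto
next
  case (Cons x xs)
  then obtain ys y where "list_all2 P xs ys" "P x y" by auto
  then show ?case by (intro exI[of _ "y # ys"]) auto
qed

lemma grouping: "F \<in> schreier (a + b) \<Longrightarrow> \<exists>Gs. part Gs F b a"
proof (induction a arbitrary: F)
  case 0
  show ?case
  proof (cases "F = {}")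
    case True then show ?thesis by (intro exI[of _ "[]"]) (auto simp: part_def)
  next
    case False
    have "finite F" "\<forall>x\<in>F. x \<ge> 1" using 0 schreier_fin_pos by auto
    then have "Min F \<ge> 1" using False by auto
    then show ?thesis using False 0 by (intro exI[of _ "[F]"]) (auto simp: part_def)
  qed
next
  case (Suc a)
  show ?case
  proof (cases "F = {}")
    case True then show ?thesis by (intro exI[of _ "[]"]) (auto simp: part_def)
  next
    case False
    from Suc.prems obtain Fs where Fs: "F = \<Union>(set Fs)" "Fs \<noteq> []" "\<forall>G\<in>set Fs. G \<in> schreier (a+b) \<and> G \<noteq> {}"
      "successive Fs" "length Fs \<le> Min (hd Fs)"
      using False by auto
    have "\<forall>G\<in>set Fs. \<exists>Gs. part Gs G b a"
    proof
      fix G assume "G \<in> set Fs"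
      then have "G \<in> schreier (a+b)" using Fs(3) by simp
      then show "\<exists>Gs. part Gs G b a" by (rule Suc.IH)
    qed
    then have "\<exists>Gss. list_all2 (\<lambda>G Gs. part Gs G b a) Fs Gss" by (rule list_choice)
    then obtain Gss where Gss: "list_all2 (\<lambda>G Gs. part Gs G b a) Fs Gss" by (rule exE)
    have lenG: "length Gss = length Fs" using Gss list_all2_lengthD by fastforce
    have pi: "\<And>i. i < length Fs \<Longrightarrow> part (Gss!i) (Fs!i) b a"
      using Gss by (simp add: list_all2_conv_all_nth)
    have finF: "\<forall>G\<in>set Fs. finite G" using Fs(3) schreier_fin_pos by blast
    define Gs where "Gs = concat Gss"
    define Ms where "Ms = map (\<lambda>Gs. Min ` set Gs) Gss"
    have inGs: "\<exists>i<length Fs. G \<in> set (Gss!i)" if "G \<in> set Gs" for G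
    proof -
      have "G \<in> set (concat Gss)" using that Gs_def by simp
      then obtain X where X: "X \<in> set Gss" "G \<in> set X" by auto
      then obtain i where "i < length Gss" "X = Gss!i" by (auto simp: in_set_conv_nth)
      then show ?thesis using X lenG by auto
    qed
    have subF: "\<And>i G. i < length Fs \<Longrightarrow> G \<in> set (Gss!i) \<Longrightarrow> G \<subseteq> Fs!i"
      using pi unfolding part_def by blast
    have A1: "\<forall>G\<in>set Gs. G \<noteq> {} \<and> G \<in> schreier b"
      using inGs pi unfolding part_def by blast
    have srtF: "sorted_wrt set_less Fs" using Fs(4) successive_iff by blast
    have A2: "sorted_wrt set_less Gs"
    proof -
      have "\<And>k. k \<le> length Fs \<Longrightarrow> sorted_wrt set_less (concat (drop k Gss))"
      proof -
        fix k assume "k \<le> length Fs"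
        then show "sorted_wrt set_less (concat (drop k Gss))"
        proof (induction "length Fs - k" arbitrary: k)
          case 0 then show ?case using lenG by simp
        next
          case (Suc d)
          then have k: "k < length Fs" by linarith
          have dr: "drop k Gss = Gss!k # drop (Suc k) Gss" using k lenG by (simp add: Cons_nth_drop_Suc)
          have ih: "sorted_wrt set_less (concat (drop (Suc k) Gss))" using Suc by simp
          have s1: "sorted_wrt set_less (Gss!k)" using pi[OF k] unfolding part_def by blast
          have s3: "\<forall>x\<in>set (Gss!k). \<forall>y\<in>set (concat (drop (Suc k) Gss)). set_less x y"
          proof (intro ballI)
            fix x y assume x: "x \<in> set (Gss!k)" and y: "y \<in> set (concat (drop (Suc k) Gss))"
            then obtain Y where Y: "Y \<in> set (drop (Suc k) Gss)" "y \<in> set Y" by auto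
            then obtain t where t: "t < length (drop (Suc k) Gss)" "Y = drop (Suc k) Gss ! t"
              by (auto simp: in_set_conv_nth)
            define j where "j = Suc k + t"
            have j: "Suc k \<le> j" "j < length Fs" "y \<in> set (Gss!j)"
              using t Y lenG unfolding j_def by auto
            have "set_less (Fs!k) (Fs!j)" using srtF j sorted_wrt_nth_less by fastforce
            then show "set_less x y" using subF[OF k x] subF[OF j(2) j(3)] set_less_mono by blast
          qed
          show ?case using dr ih s1 s3 by (simp add: sorted_wrt_append)
        qed
      qed
      from this[of 0] show ?thesis unfolding Gs_def by simp
    qed
    have A3: "\<Union>(set Gs) = F"
    proof -
      have "\<Union>(set Gs) = (\<Union>X\<in>set Gss. \<Union>(set X))" unfolding Gs_def by auto
      also have "\<dots> = (\<Union>i<length Gss. \<Union>(set (Gss!i)))" by (rule UN_list_nth)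
      also have "\<dots> = (\<Union>i<length Fs. Fs!i)"
      proof (rule SUP_cong)
        show "{..<length Gss} = {..<length Fs}" using lenG by simp
      next
        fix i assume "i \<in> {..<length Fs}"
        then show "\<Union>(set (Gss!i)) = Fs!i" using pi unfolding part_def by auto
      qed
      also have "\<dots> = (\<Union>X\<in>set Fs. X)" by (rule UN_list_nth[symmetric])
      also have "\<dots> = F" using Fs(1) by simp
      finally show ?thesis .
    qed
    have A4: "Min ` set Gs \<in> schreier (Suc a)"
    proof -
      have U: "Min ` set Gs = \<Union>(set Ms)" unfolding Gs_def Ms_def by auto
      have ne: "Ms \<noteq> []" using Fs(2) lenG unfolding Ms_def by auto
      have Gne: "\<And>i. i < length Fs \<Longrightarrow> Gss!i \<noteq> []"
      proof -
        fix i assume i: "i < length Fs"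
        have "Fs!i \<noteq> {}" using Fs(3) i by auto
        then show "Gss!i \<noteq> []" using pi[OF i] unfolding part_def by auto
      qed
      have mem: "\<forall>M\<in>set Ms. M \<in> schreier a \<and> M \<noteq> {}"
      proof
        fix M assume "M \<in> set Ms"
        then obtain i where i: "i < length Fs" "M = Min ` set (Gss!i)" unfolding Ms_def using lenG
          by (auto simp: in_set_conv_nth)
        then show "M \<in> schreier a \<and> M \<noteq> {}" using pi[OF i(1)] Gne[OF i(1)] unfolding part_def by auto
      qed
      have minsub: "\<And>i. i < length Fs \<Longrightarrow> Min ` set (Gss!i) \<subseteq> Fs!i"
      proof
        fix i x assume i: "i < length Fs" and x: "x \<in> Min ` set (Gss!i)"
        then obtain G where G: "G \<in> set (Gss!i)" "x = Min G" by auto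
        have "G \<noteq> {}" "G \<in> schreier b" using G pi[OF i] unfolding part_def by auto
        then have "Min G \<in> G" using schreier_fin_pos by (intro Min_in) auto
        then show "x \<in> Fs!i" using subF[OF i G(1)] G by auto
      qed
      have lM: "length Ms = length Fs" unfolding Ms_def using lenG by simp
      have Msi: "Ms!i = Min ` set (Gss!i)" if "i < length Fs" for i
        using that lenG unfolding Ms_def by simp
      have succ: "successive Ms" unfolding successive_iff sorted_wrt_iff_nth_less
      proof (intro allI impI)
        fix i j assume ij: "i < j" "j < length Ms"
        then have j: "j < length Fs" and i: "i < length Fs" using lM by auto
        have "set_less (Fs!i) (Fs!j)" by (rule sorted_wrt_nth_less[OF srtF ij(1) j])
        then have "set_less (Min ` set (Gss!i)) (Min ` set (Gss!j))"
          by (rule set_less_mono[OF _ minsub[OF i] minsub[OF j]])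
        then show "set_less (Ms!i) (Ms!j)" using Msi[OF i] Msi[OF j] by simp
      qed
      have "Min (hd Fs) \<le> Min (hd Ms)"
      proof -
        have z: "0 < length Fs" using Fs(2) by simp
        have h: "hd Ms = Ms!0" "hd Fs = Fs!0" using ne Fs(2) by (simp_all add: hd_conv_nth)
        then have h2: "hd Ms = Min ` set (Gss!0)" using Msi[OF z] by simp
        have "finite (hd Ms)" "hd Ms \<noteq> {}" using h2 Gne[OF z] by simp_all
        then have "Min (hd Ms) \<in> hd Ms" by (rule Min_in)
        then have "Min (hd Ms) \<in> hd Fs" using minsub[OF z] h2 h by blast
        moreover have "finite (hd Fs)" using finF Fs(2) by simp
        ultimately show ?thesis by simp
      qed
      moreover have "length Ms = length Fs" unfolding Ms_def using lenG by simp
      ultimately have "length Ms \<le> Min (hd Ms)" using Fs(5) by linarith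
      then show ?thesis using U ne mem succ by auto
    qed
    show ?thesis using A1 A2 A3 A4 unfolding part_def by blast
  qed
qed



definition lc :: "(real \<times> fnl) list \<Rightarrow> fnl" where
  "lc ps = (\<lambda>j. \<Sum>p\<leftarrow>ps. fst p * snd p j)"

definition key :: "real \<times> fnl \<Rightarrow> nat" where
  "key p = Min (supp (snd p))"

definition sq :: "real \<Rightarrow> (real \<times> fnl) list \<Rightarrow> real" where
  "sq q ps = (\<Sum>p\<leftarrow>ps. \<bar>fst p\<bar> powr q)"

definition R :: "real \<times> fnl \<Rightarrow> real \<times> fnl \<Rightarrow> bool" where
  "R p p' \<longleftrightarrow> set_less (supp (snd p)) (supp (snd p'))"

lemma lc_append: "lc (ps @ qs) j = lc ps j + lc qs j"
  unfolding lc_def by simp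

lemma sum_list_concat_map: "(\<Sum>x\<leftarrow>concat xss. f x) = (\<Sum>xs\<leftarrow>xss. \<Sum>x\<leftarrow>xs. f x)"
  for f :: "'a \<Rightarrow> real"
  by (induction xss) auto

lemma lin_comb_zip: "length \<gamma> = length xs \<Longrightarrow> lin_comb \<gamma> xs = lc (zip \<gamma> xs)"
  unfolding lin_comb_def lc_def
  by (auto simp: sum_list_sum_nth atLeast0LessThan)

lemma lin_comb_pairs: "lin_comb (map fst ps) (map snd ps) = lc ps"
  using lin_comb_zip[of "map fst ps" "map snd ps"] by (simp add: zip_map_fst_snd)

lemma powr_inv_le1_iff: "0 \<le> (x::real) \<Longrightarrow> 0 < q \<Longrightarrow> x powr (1/q) \<le> 1 \<longleftrightarrow> x \<le> 1"
proof
  assume x: "0 \<le> x" "0 < q" "x powr (1/q) \<le> 1"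
  show "x \<le> 1"
  proof (rule ccontr)
    assume "\<not> x \<le> 1"
    then have "1 < x" by simp
    then have "x powr 0 < x powr (1/q)" using x(2) by simp
    then show False using x(3) \<open>1 < x\<close> by simp
  qed
next
  assume "0 \<le> x" "0 < q" "x \<le> 1"
  then show "x powr (1/q) \<le> 1" by (intro powr_le1) auto
qed

lemma in_ball_sq: "0 < q \<Longrightarrow> in_ball q 1 (map fst ps) \<longleftrightarrow> sq q ps \<le> 1"
proof -
  assume q: "0 < q"
  have e: "(\<Sum>i<length (map fst ps). \<bar>map fst ps ! i\<bar> powr q) = sq q ps"
    unfolding sq_def by (simp add: sum_list_sum_nth atLeast0LessThan)
  have "0 \<le> sq q ps" unfolding sq_def by (intro sum_list_nonneg) auto
  then show ?thesis unfolding in_ball_def e using powr_inv_le1_iff q by blast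
qed

lemma sum_list_filter_le: "(\<And>x. 0 \<le> f x) \<Longrightarrow> (\<Sum>x\<leftarrow>filter P xs. f x) \<le> (\<Sum>x\<leftarrow>xs. (f x::real))"
  by (induction xs) (auto simp: add_increasing)

lemma block_less:
  assumes srt: "sorted_wrt R ps" and ne: "\<forall>p\<in>set ps. supp (snd p) \<noteq> {} \<and> finite (supp (snd p))"
    and p: "p \<in> set ps" and p': "p' \<in> set ps" and k: "key p < key p'"
  shows "set_less (supp (snd p)) (supp (snd p'))"
proof -
  obtain i where i: "i < length ps" "p = ps!i" using p by (auto simp: in_set_conv_nth)
  obtain j where j: "j < length ps" "p' = ps!j" using p' by (auto simp: in_set_conv_nth)
  have mp: "key p \<in> supp (snd p)" "key p' \<in> supp (snd p')" unfolding key_def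
    using ne p p' by (auto intro: Min_in)
  consider "i < j" | "i = j" | "j < i" by linarith
  then show ?thesis
  proof cases
    case 1 then show ?thesis using sorted_wrt_nth_less[OF srt 1 j(1)] i j unfolding R_def by simp
  next
    case 2 then show ?thesis using i j k by simp
  next
    case 3
    then have "set_less (supp (snd p')) (supp (snd p))"
      using sorted_wrt_nth_less[OF srt 3 i(1)] i j unfolding R_def by simp
    then have "key p' < key p" using mp unfolding set_less_def by blast
    then show ?thesis using k by simp
  qed
qed

lemma lc_point:
  assumes srt: "sorted_wrt R ps" and p: "p \<in> set ps" and s: "s \<in> supp (snd p)"
  shows "lc ps s = fst p * snd p s"
proof -
  obtain i0 where i0: "i0 < length ps" "p = ps!i0" using p by (auto simp: in_set_conv_nth)
  have z: "fst (ps!i) * snd (ps!i) s = 0" if hi: "i < length ps" "i \<noteq> i0" for i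
  proof -
    have "s \<notin> supp (snd (ps!i))"
    proof
      assume si: "s \<in> supp (snd (ps!i))"
      consider "i < i0" | "i0 < i" using hi by linarith
      then show False
      proof cases
        case 1 then have "R (ps!i) (ps!i0)" using sorted_wrt_nth_less[OF srt 1 i0(1)] by simp
        then show False using si s i0 unfolding R_def set_less_def by blast
      next
        case 2 then have "R (ps!i0) (ps!i)" using sorted_wrt_nth_less[OF srt 2 hi(1)] by simp
        then show False using si s i0 unfolding R_def set_less_def by blast
      qed
    qed
    then show ?thesis unfolding supp_def by simp
  qed
  have "lc ps s = (\<Sum>i<length ps. fst (ps!i) * snd (ps!i) s)"
    unfolding lc_def by (simp add: sum_list_sum_nth atLeast0LessThan)
  also have "\<dots> = fst (ps!i0) * snd (ps!i0) s"
  proof -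
    have "(\<Sum>i<length ps. fst (ps!i) * snd (ps!i) s) = fst (ps!i0) * snd (ps!i0) s
       + (\<Sum>i\<in>{..<length ps} - {i0}. fst (ps!i) * snd (ps!i) s)"
      using i0(1) by (intro sum.remove) auto
    also have "(\<Sum>i\<in>{..<length ps} - {i0}. fst (ps!i) * snd (ps!i) s) = 0"
      using z by (intro sum.neutral) auto
    finally show ?thesis by simp
  qed
  finally show ?thesis using i0 by simp
qed

lemma lc_supp: "lc ps s \<noteq> 0 \<Longrightarrow> \<exists>p\<in>set ps. s \<in> supp (snd p)"
proof (rule ccontr)
  assume a: "lc ps s \<noteq> 0" "\<not> (\<exists>p\<in>set ps. s \<in> supp (snd p))"
  then have "\<forall>p\<in>set ps. fst p * snd p s = 0" unfolding supp_def by auto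
  then have "(\<Sum>p\<leftarrow>ps. fst p * snd p s) = (\<Sum>p\<leftarrow>ps. 0)"
    by (intro arg_cong[where f=sum_list] map_cong) auto
  then have "lc ps s = 0" unfolding lc_def by simp
  then show False using a by simp
qed

lemma filter_split:
  assumes "\<And>x y. x \<in> set xs \<Longrightarrow> y \<in> set xs \<Longrightarrow> P x \<Longrightarrow> \<not> P y \<Longrightarrow> f x < f y"
    and "sorted_wrt (\<lambda>x y. f x < (f y::nat)) xs"
  shows "xs = filter P xs @ filter (\<lambda>x. \<not> P x) xs"
  using assms
proof (induction xs)
  case Nil then show ?case by simp
next
  case (Cons x xs)
  show ?case
  proof (cases "P x")
    case True then show ?thesis using Cons by simp
  next
    case False
    have "\<forall>y\<in>set xs. \<not> P y"
    proof (intro ballI notI)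
      fix y assume y: "y \<in> set xs" "P y"
      then have "f y < f x" using Cons.prems(1)[of y x] False by simp
      moreover have "f x < f y" using Cons.prems(2) y by simp
      ultimately show False by simp
    qed
    then show ?thesis using False by simp
  qed
qed

lemma concat_groups:
  assumes "sorted_wrt (\<lambda>x y. f x < (f y::nat)) xs" "sorted_wrt set_less Gs"
    "\<forall>x\<in>set xs. f x \<in> \<Union>(set Gs)"
  shows "concat (map (\<lambda>G. filter (\<lambda>x. f x \<in> G) xs) Gs) = xs"
  using assms
proof (induction Gs arbitrary: xs)
  case Nil then show ?case by simp
next
  case (Cons G Gs)
  let ?ys = "filter (\<lambda>x. f x \<notin> G) xs"
  have split: "xs = filter (\<lambda>x. f x \<in> G) xs @ ?ys"
  proof (rule filter_split)
    fix x y assume xy: "x \<in> set xs" "y \<in> set xs" "f x \<in> G" "f y \<notin> G"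
    then obtain H where "H \<in> set Gs" "f y \<in> H" using Cons.prems(3) by auto
    then have "set_less G H" using Cons.prems(2) by simp
    then show "f x < f y" using xy \<open>f y \<in> H\<close> unfolding set_less_def by blast
  qed (use Cons.prems in auto)
  have dis: "\<forall>H\<in>set Gs. G \<inter> H = {}" using Cons.prems(2) unfolding set_less_def by force
  have c1: "concat (map (\<lambda>H. filter (\<lambda>x. f x \<in> H) ?ys) Gs) = ?ys"
    using Cons.prems by (intro Cons.IH) (auto intro: sorted_wrt_filter)
  have c2: "map (\<lambda>H. filter (\<lambda>x. f x \<in> H) ?ys) Gs = map (\<lambda>H. filter (\<lambda>x. f x \<in> H) xs) Gs"
  proof (rule map_cong[OF refl])
    fix H assume "H \<in> set Gs"
    then have "G \<inter> H = {}" using dis by auto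
    then show "filter (\<lambda>x. f x \<in> H) ?ys = filter (\<lambda>x. f x \<in> H) xs"
      by (auto simp: filter_filter intro!: filter_cong)
  qed
  have e: "concat (map (\<lambda>H. filter (\<lambda>x. f x \<in> H) xs) Gs) = ?ys" unfolding c2[symmetric] by (rule c1)
  have "concat (map (\<lambda>H. filter (\<lambda>x. f x \<in> H) xs) (G # Gs)) = filter (\<lambda>x. f x \<in> G) xs @ ?ys"
    by (simp only: list.map concat.simps e)
  then show ?case using split by simp
qed



definition good :: "fnl set \<Rightarrow> real \<Rightarrow> (real \<times> fnl) list \<Rightarrow> bool" where
 "good NN q ps \<longleftrightarrow> set (map snd ps) \<subseteq> NN \<and> (\<forall>p\<in>set ps. fst p \<noteq> 0 \<and> supp (snd p) \<noteq> {})
    \<and> sorted_wrt R ps \<and> sq q ps \<le> 1"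

lemma R_eq: "R = (\<lambda>p p'. set_less (supp (snd p)) (supp (snd p')))"
  by (auto simp: R_def fun_eq_iff)

lemma sum_list_div: "(\<Sum>x\<leftarrow>xs. f x / c) = (\<Sum>x\<leftarrow>xs. f x) / (c::real)"
  by (induction xs) (auto simp: add_divide_distrib)

lemma sum_list_cmult: "(\<Sum>x\<leftarrow>xs. c * f x) = c * (\<Sum>x\<leftarrow>xs. f x::real)"
  by (induction xs) (auto simp: algebra_simps)

lemma outer:
  assumes sn: "schreier_norming m n q NN" and q: "0 < q" and l: "1 \<le> l" and ne: "ps \<noteq> []"
    and sub: "set (map snd ps) \<subseteq> NN" and srt: "sorted_wrt R ps" and sq: "sq q ps \<le> 1"
    and adm: "{Min (supp x) | x. x \<in> set (map snd ps) \<and> supp x \<noteq> {}} \<in> schreier (n (2*l))"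
  shows "(\<lambda>j. (1 / real (m (2*l))) * lc ps j) \<in> NN"
proof -
  have ib: "in_ball q 1 (map fst ps)" using in_ball_sq[OF q] sq by simp
  have bs: "block_seq (map snd ps)" unfolding block_seq_def successive_iff
    using srt by (simp add: sorted_wrt_map R_eq)
  have ad: "admissible (n (2*l)) (map snd ps)" unfolding admissible_def using bs adm by simp
  have "(\<lambda>j. (1 / real (m (2*l))) * lin_comb (map fst ps) (map snd ps) j) \<in> NN_k m n q NN l"
    unfolding NN_k_def mem_Collect_eq
    apply (rule exI[of _ "map fst ps"])
    apply (rule exI[of _ "map snd ps"])
    using ne ib sub ad by simp
  then have "(\<lambda>j. (1 / real (m (2*l))) * lc ps j) \<in> NN_k m n q NN l"
    by (simp add: lin_comb_pairs)
  then show ?thesis using sn l unfolding schreier_norming_def by blast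
qed



lemma NN_fin: "norming NN \<Longrightarrow> x \<in> NN \<Longrightarrow> finite (supp x)"
  unfolding norming_def by blast

lemma prod_list_pos_nat: "(\<forall>x\<in>set xs. 0 < f x) \<Longrightarrow> 0 < (\<Prod>x\<leftarrow>xs. f x :: nat)"
  by (induction xs) auto

lemma sq_nonneg: "0 \<le> sq q ps"
  unfolding sq_def by (induction ps) auto

lemma main:
  assumes sn: "schreier_norming m n q NN" and q: "0 < q" and mpos: "\<forall>i\<ge>1. m i \<ge> 1"
  shows "ls \<noteq> [] \<Longrightarrow> \<forall>l\<in>set ls. 1 \<le> l \<Longrightarrow> ps \<noteq> [] \<Longrightarrow> good NN q ps
    \<Longrightarrow> key ` set ps \<in> schreier (\<Sum>l\<leftarrow>ls. n (2*l))
    \<Longrightarrow> (\<lambda>j. (1 / real (\<Prod>l\<leftarrow>ls. m (2*l))) * lc ps j) \<in> NN"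
proof (induction ls arbitrary: ps)
  case Nil then show ?case by simp
next
  case (Cons l ls)
  have nor: "norming NN" using sn unfolding schreier_norming_def by blast
  have l: "1 \<le> l" using Cons.prems by simp
  have gd: "set (map snd ps) \<subseteq> NN" "\<forall>p\<in>set ps. fst p \<noteq> 0 \<and> supp (snd p) \<noteq> {}"
      "sorted_wrt R ps" "sq q ps \<le> 1"
    using Cons.prems(4) unfolding good_def by auto
  have fin: "\<forall>p\<in>set ps. finite (supp (snd p))" using gd(1) NN_fin[OF nor] by auto
  have keyin: "key p \<in> supp (snd p)" if "p \<in> set ps" for p
    unfolding key_def using fin gd(2) that by (intro Min_in) auto
  have keyle: "key p \<le> s" if "p \<in> set ps" "s \<in> supp (snd p)" for p s
    unfolding key_def using fin that by auto
  show ?case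
  proof (cases "ls = []")
    case True
    have e: "{Min (supp x) | x. x \<in> set (map snd ps) \<and> supp x \<noteq> {}} = key ` set ps"
      using gd(2) unfolding key_def by auto
    show ?thesis using outer[OF sn q l Cons.prems(3) gd(1) gd(3) gd(4)] Cons.prems(5) e True by simp
  next
    case False
    define N' where "N' = (\<Sum>l\<leftarrow>ls. n (2*l))"
    define P' where "P' = (\<Prod>l\<leftarrow>ls. m (2*l))"
    have P'pos: "0 < P'" unfolding P'_def using Cons.prems(2) mpos
    proof (intro prod_list_pos_nat ballI)
      fix x assume "x \<in> set ls"
      then have "1 \<le> 2*x" using Cons.prems(2) by auto
      then show "0 < m (2*x)" using mpos by fastforce
    qed
    have "key ` set ps \<in> schreier (n (2*l) + N')" using Cons.prems(5) unfolding N'_def by simp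
    then obtain Gs where "part Gs (key ` set ps) N' (n (2*l))" using grouping by blast
    then have Gne: "\<forall>G\<in>set Gs. G \<noteq> {} \<and> G \<in> schreier N'" and srtG: "sorted_wrt set_less Gs"
      and UG: "\<Union>(set Gs) = key ` set ps" and MG: "Min ` set Gs \<in> schreier (n (2*l))"
      unfolding part_def by auto
    have keysrt: "sorted_wrt (\<lambda>x y. key x < key y) ps"
    proof (rule sorted_wrt_mono_rel[OF _ gd(3)])
      fix x y assume "x \<in> set ps" "y \<in> set ps" "R x y"
      then show "key x < key y" using keyin unfolding R_def set_less_def by blast
    qed
    define grp where "grp G = filter (\<lambda>p. key p \<in> G) ps" for G
    have cc: "concat (map grp Gs) = ps" unfolding grp_def
      using concat_groups[OF keysrt srtG] UG by auto
    define gam where "gam G = sq q (grp G) powr (1/q)" for G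
    define inner where "inner G = map (\<lambda>p. (fst p / gam G, snd p)) (grp G)" for G
    define Y where "Y G = (\<lambda>j. (1 / real P') * lc (inner G) j)" for G
    define os where "os = map (\<lambda>G. (gam G, Y G)) Gs"
    have grpsub: "set (grp G) \<subseteq> set ps" for G unfolding grp_def by auto
    have keygrp: "key ` set (grp G) = G" if "G \<in> set Gs" for G
      using that UG unfolding grp_def by auto
    have sqpos: "0 < sq q (grp G)" if GG: "G \<in> set Gs" for G
    proof -
      obtain x where "x \<in> G" using Gne GG by auto
      then obtain p where p: "p \<in> set (grp G)" using keygrp[OF GG] by auto
      then obtain xs1 xs2 where sp: "grp G = xs1 @ p # xs2" by (meson split_list)
      have "fst p \<noteq> 0" using p grpsub gd(2) by auto
      then have "0 < \<bar>fst p\<bar> powr q" by simp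
      moreover have "0 \<le> sq q xs1" "0 \<le> sq q xs2" by (rule sq_nonneg)+
      moreover have "sq q (grp G) = sq q xs1 + \<bar>fst p\<bar> powr q + sq q xs2"
        unfolding sp sq_def by simp
      ultimately show ?thesis by linarith
    qed
    have gampos: "0 < gam G" if "G \<in> set Gs" for G
      unfolding gam_def using sqpos[OF that] by simp
    have gamq: "gam G powr q = sq q (grp G)" if "G \<in> set Gs" for G
      unfolding gam_def using sqpos[OF that] q by (simp add: powr_powr)
    have sqinner: "sq q (inner G) = 1" if "G \<in> set Gs" for G
    proof -
      have "sq q (inner G) = (\<Sum>p\<leftarrow>grp G. \<bar>fst p\<bar> powr q / gam G powr q)"
        unfolding sq_def inner_def using gampos[OF that]
        by (simp add: o_def abs_divide powr_divide)
      also have "\<dots> = sq q (grp G) / gam G powr q" unfolding sq_def by (rule sum_list_div)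
      also have "\<dots> = 1" using gamq[OF that] sqpos[OF that] by simp
      finally show ?thesis .
    qed
    have srtinner: "sorted_wrt R (inner G)" for G
      unfolding inner_def grp_def using gd(3) by (simp add: sorted_wrt_map R_eq sorted_wrt_filter)
    have keyinner: "key ` set (inner G) = G" if "G \<in> set Gs" for G
    proof -
      have "key ` set (inner G) = key ` set (grp G)" unfolding inner_def key_def by force
      then show ?thesis using keygrp[OF that] by simp
    qed
    have goodinner: "good NN q (inner G)" if "G \<in> set Gs" for G
      unfolding good_def
    proof (intro conjI)
      show "set (map snd (inner G)) \<subseteq> NN" unfolding inner_def using grpsub gd(1) by auto
      show "\<forall>p\<in>set (inner G). fst p \<noteq> 0 \<and> supp (snd p) \<noteq> {}"
        unfolding inner_def using grpsub gd(2) gampos[OF that] by auto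
      show "sorted_wrt R (inner G)" by (rule srtinner)
      show "sq q (inner G) \<le> 1" using sqinner[OF that] by simp
    qed
    have innerne: "inner G \<noteq> []" if "G \<in> set Gs" for G
      using keyinner[OF that] Gne that by auto
    have YNN: "Y G \<in> NN" if "G \<in> set Gs" for G
      unfolding Y_def P'_def
      using Cons.IH[OF False _ innerne[OF that] goodinner[OF that]] Cons.prems(2) keyinner[OF that] Gne that
      by (simp add: N'_def)
    have lcinner: "lc (inner G) j = lc (grp G) j / gam G" for G j
      unfolding lc_def inner_def by (simp add: o_def sum_list_div[symmetric])
    have suppY: "\<exists>p\<in>set (grp G). s \<in> supp (snd p)" if ss: "s \<in> supp (Y G)" for G s
    proof -
      have "lc (inner G) s \<noteq> 0" using ss unfolding supp_def Y_def by auto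
      then obtain p where "p \<in> set (inner G)" "s \<in> supp (snd p)" using lc_supp by blast
      then show ?thesis unfolding inner_def by force
    qed
    have minY: "supp (Y G) \<noteq> {} \<and> Min (supp (Y G)) = Min G" if G: "G \<in> set Gs" for G
    proof -
      have fG: "finite G" "G \<noteq> {}" using Gne G schreier_fin_pos by auto
      then have "Min G \<in> G" by simp
      then obtain p0 where p0: "p0 \<in> set (grp G)" "key p0 = Min G" using keygrp[OF G] by force
      have p0ps: "p0 \<in> set ps" using p0 grpsub by auto
      let ?s0 = "key p0"
      have s0: "?s0 \<in> supp (snd p0)" using keyin[OF p0ps] .
      have hp: "(fst p0 / gam G, snd p0) \<in> set (inner G)" unfolding inner_def using p0 by auto
      have "lc (inner G) ?s0 = (fst p0 / gam G) * snd p0 ?s0"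
        using lc_point[OF srtinner hp] s0 by simp
      moreover have "fst p0 \<noteq> 0" "snd p0 ?s0 \<noteq> 0" using gd(2) p0ps s0 unfolding supp_def by auto
      ultimately have "lc (inner G) ?s0 \<noteq> 0" using gampos[OF G] by simp
      then have s0Y: "?s0 \<in> supp (Y G)" unfolding supp_def Y_def using P'pos by simp
      have finY: "finite (supp (Y G))" using NN_fin[OF nor YNN[OF G]] .
      have lb: "Min G \<le> s" if ss: "s \<in> supp (Y G)" for s
      proof -
        obtain p where p: "p \<in> set (grp G)" "s \<in> supp (snd p)" using suppY[OF ss] by blast
        have "p \<in> set ps" using p grpsub by auto
        then have "key p \<le> s" using keyle p by blast
        moreover have "key p \<in> G" using p unfolding grp_def by simp
        ultimately show ?thesis using fG by (meson Min_le le_trans)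
      qed
      have "Min (supp (Y G)) \<le> Min G" using finY s0Y p0 by (metis Min_le)
      moreover have "Min G \<le> Min (supp (Y G))" using finY s0Y lb by (metis Min_in empty_iff)
      ultimately show ?thesis using s0Y by auto
    qed
    have Gsne: "Gs \<noteq> []" using UG Cons.prems(3) by auto
    have osNN: "set (map snd os) \<subseteq> NN" unfolding os_def using YNN by auto
    have srtos: "sorted_wrt R os" unfolding os_def R_eq sorted_wrt_map
    proof (rule sorted_wrt_mono_rel[OF _ srtG], simp)
      fix G G' assume G: "G \<in> set Gs" "G' \<in> set Gs" "set_less G G'"
      show "set_less (supp (Y G)) (supp (Y G'))" unfolding set_less_def
      proof (intro ballI)
        fix s s' assume s: "s \<in> supp (Y G)" "s' \<in> supp (Y G')"
        obtain p where p: "p \<in> set (grp G)" "s \<in> supp (snd p)" using suppY[OF s(1)] by blast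
        obtain p' where p': "p' \<in> set (grp G')" "s' \<in> supp (snd p')" using suppY[OF s(2)] by blast
        have "key p \<in> G" "key p' \<in> G'" using p p' unfolding grp_def by auto
        then have "key p < key p'" using G unfolding set_less_def by blast
        then have "set_less (supp (snd p)) (supp (snd p'))"
          using block_less[OF gd(3) _ _ _ \<open>key p < key p'\<close>] p p' grpsub gd(2) fin by blast
        then show "s < s'" using p p' unfolding set_less_def by blast
      qed
    qed
    have sqos: "sq q os \<le> 1"
    proof -
      have "sq q os = (\<Sum>G\<leftarrow>Gs. gam G powr q)"
        unfolding sq_def os_def using gampos
        by (simp add: o_def, intro arg_cong[where f=sum_list] map_cong) (simp_all add: abs_of_pos)
      also have "\<dots> = (\<Sum>G\<leftarrow>Gs. sq q (grp G))"
        using gamq by (intro arg_cong[where f=sum_list] map_cong) auto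
      also have "\<dots> = sq q (concat (map grp Gs))"
        unfolding sq_def sum_list_concat_map by (simp add: o_def)
      also have "\<dots> = sq q ps" using cc by simp
      finally show ?thesis using gd(4) by simp
    qed
    have minset: "{Min (supp x) | x. x \<in> set (map snd os) \<and> supp x \<noteq> {}} = Min ` set Gs"
      unfolding os_def using minY by force
    have outNN: "(\<lambda>j. (1 / real (m (2*l))) * lc os j) \<in> NN"
      using outer[OF sn q l _ osNN srtos sqos] Gsne minset MG unfolding os_def by simp
    have lcos: "lc os j = (1 / real P') * lc ps j" for j
    proof -
      have "lc os j = (\<Sum>G\<leftarrow>Gs. gam G * Y G j)" unfolding lc_def os_def by (simp add: o_def)
      also have "\<dots> = (\<Sum>G\<leftarrow>Gs. (1 / real P') * lc (grp G) j)"
      proof (rule arg_cong[where f=sum_list], rule map_cong[OF refl])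
        fix G assume "G \<in> set Gs"
        then have "0 < gam G" by (rule gampos)
        then show "gam G * Y G j = (1 / real P') * lc (grp G) j" by (simp add: Y_def lcinner)
      qed
      also have "\<dots> = (1 / real P') * (\<Sum>G\<leftarrow>Gs. lc (grp G) j)" by (rule sum_list_cmult)
      also have "(\<Sum>G\<leftarrow>Gs. lc (grp G) j) = lc (concat (map grp Gs)) j"
        unfolding lc_def sum_list_concat_map by (simp add: o_def)
      finally show ?thesis using cc by simp
    qed
    show ?thesis using outNN unfolding lcos P'_def by simp
  qed
qed



lemma sum_list_concat_gen: "(\<Sum>x\<leftarrow>concat xss. f x) = (\<Sum>xs\<leftarrow>xss. \<Sum>x\<leftarrow>xs. (f x :: 'b::comm_monoid_add))"
  by (induction xss) auto

lemma prod_list_concat_gen: "(\<Prod>x\<leftarrow>concat xss. f x) = (\<Prod>xs\<leftarrow>xss. \<Prod>x\<leftarrow>xs. (f x :: 'b::comm_monoid_mult))"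
  by (induction xss) auto

lemma sum_upt_list: "(\<Sum>l\<leftarrow>[1..<k]. g l) = (\<Sum>l\<in>{1..<k}. (g l :: nat))"
  by (metis distinct_upt set_upt sum.distinct_set_conv_list)

lemma prod_upt_list: "(\<Prod>l\<leftarrow>[1..<k]. g l) = (\<Prod>l\<in>{1..<k}. (g l :: nat))"
  by (metis distinct_upt set_upt prod.distinct_set_conv_list)

theorem mainTheorem7:
  fixes m n :: "nat \<Rightarrow> nat" and q :: real and NN :: "fnl set"
    and k :: nat and a :: "nat \<Rightarrow> nat" and xs :: "fnl list" and \<beta> :: "real list"
  assumes "MN_sequences m n"
    and "1 < q"
    and "schreier_norming m n q NN"
    and "k \<ge> 2"
    and "\<exists>l\<in>{1..<k}. a l \<noteq> 0"
    and "xs \<noteq> []"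
    and "set xs \<subseteq> NN"
    and "admissible (\<Sum>l\<in>{1..<k}. a l * n (2*l)) xs"
    and "length \<beta> = length xs"
    and "in_ball q 1 \<beta>"
  shows "(\<lambda>j. (1 / real (\<Prod>l\<in>{1..<k}. m (2*l) ^ a l)) * lin_comb \<beta> xs j) \<in> NN"
proof -
  note MN = assms(1) and sn = assms(3)
  have q: "0 < q" using assms(2) by simp
  have mpos: "\<forall>i\<ge>1. m i \<ge> 1" using MN unfolding MN_sequences_def by blast
  have nor: "norming NN" using sn unfolding schreier_norming_def by blast
  define ls where "ls = concat (map (\<lambda>l. replicate (a l) l) [1..<k])"
  have lsum: "(\<Sum>l\<leftarrow>ls. n (2*l)) = (\<Sum>l\<in>{1..<k}. a l * n (2*l))"
    unfolding ls_def sum_list_concat_gen sum_upt_list[symmetric] by (simp add: o_def sum_list_replicate)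
  have lprod: "(\<Prod>l\<leftarrow>ls. m (2*l)) = (\<Prod>l\<in>{1..<k}. m (2*l) ^ a l)"
    unfolding ls_def prod_list_concat_gen prod_upt_list[symmetric] by (simp add: o_def)
  have lsne: "ls \<noteq> []" using assms(5) unfolding ls_def by auto
  have lspos: "\<forall>l\<in>set ls. 1 \<le> l" unfolding ls_def by auto
  define ps0 where "ps0 = zip \<beta> xs"
  define ps where "ps = filter (\<lambda>p. fst p \<noteq> 0 \<and> supp (snd p) \<noteq> {}) ps0"
  have lceq: "lin_comb \<beta> xs j = lc ps j" for j
  proof -
    have "lin_comb \<beta> xs j = lc ps0 j" unfolding ps0_def using lin_comb_zip[OF assms(9)] by simp
    also have "\<dots> = lc ps j" unfolding lc_def ps_def
      by (rule sum_list_map_filter[symmetric]) (auto simp: supp_def)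
    finally show ?thesis .
  qed
  show ?thesis
  proof (cases "ps = []")
    case True
    have "restr {} (unit_fnl 1) \<in> NN" using nor unfolding norming_def is_interval_def by auto
    moreover have "restr {} (unit_fnl 1) = (\<lambda>j. 0)" unfolding restr_def by simp
    ultimately show ?thesis using True lceq by (simp add: lc_def)
  next
    case False
    have sub: "set (map snd ps) \<subseteq> NN" unfolding ps_def ps0_def using assms(7)
      by (auto dest: set_zip_rightD)
    have ad: "block_seq xs" "{Min (supp x) | x. x \<in> set xs \<and> supp x \<noteq> {}} \<in> schreier (\<Sum>l\<in>{1..<k}. a l * n (2*l))"
      using assms(8) unfolding admissible_def by auto
    have srt0: "sorted_wrt R ps0" unfolding sorted_wrt_iff_nth_less
    proof (intro allI impI)
      fix i j assume ij: "i < j" "j < length ps0"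
      then have j: "j < length xs" unfolding ps0_def using assms(9) by simp
      have "sorted_wrt set_less (map supp xs)" using ad(1) unfolding block_seq_def successive_iff .
      then have "set_less (supp (xs!i)) (supp (xs!j))" using sorted_wrt_nth_less[OF _ ij(1)] j ij by fastforce
      then show "R (ps0!i) (ps0!j)" unfolding R_def ps0_def using ij j assms(9) by simp
    qed
    have srt: "sorted_wrt R ps" unfolding ps_def by (rule sorted_wrt_filter[OF srt0])
    have sq0: "sq q ps0 \<le> 1"
    proof -
      have "sq q ps0 = (\<Sum>i<length \<beta>. \<bar>\<beta> ! i\<bar> powr q)"
        unfolding sq_def ps0_def using assms(9) by (simp add: sum_list_sum_nth atLeast0LessThan)
      moreover have "0 \<le> (\<Sum>i<length \<beta>. \<bar>\<beta> ! i\<bar> powr q)" by (simp add: sum_nonneg)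
      ultimately show ?thesis using assms(10) powr_inv_le1_iff[OF _ q] unfolding in_ball_def by simp
    qed
    have "sq q ps \<le> sq q ps0" unfolding sq_def ps_def
      by (rule sum_list_filter_le) simp
    then have sqps: "sq q ps \<le> 1" using sq0 by linarith
    have gd: "good NN q ps" unfolding good_def using sub srt sqps unfolding ps_def by auto
    have ksub: "key ` set ps \<subseteq> {Min (supp x) | x. x \<in> set xs \<and> supp x \<noteq> {}}"
      unfolding ps_def ps0_def key_def by (force dest: set_zip_rightD)
    have ks: "key ` set ps \<in> schreier (\<Sum>l\<leftarrow>ls. n (2*l))"
      unfolding lsum by (rule schreier_hered[OF ad(2) ksub])
    have "(\<lambda>j. (1 / real (\<Prod>l\<leftarrow>ls. m (2*l))) * lc ps j) \<in> NN"
      by (rule main[OF sn q mpos lsne lspos False gd ks])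
    then show ?thesis unfolding lprod using lceq by simp
  qed
qed

end
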